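(* Let $V_1, V_2$ be jointly distributed binary random variables (values in $\{0,1\}$), and let $K = V_1 \oplus V_2$ (addition modulo $2$). Then the common-compression Slepian–Wolf rate for the pair $(V_1,V_2)$ satisfies $$R^{s.c.}_{SW} \le \max\big(H(K),\, H(V_1\mid K)\big).$$
   Context: Let $V_1,\dots,V_r$ be jointly distributed binary random variables with joint law $p(v_1,\dots,v_r)$, and for each $n$ let $(V_1[t],\dots,V_r[t])$, $t=1,\dots,n$, be i.i.d. copies; write $V_i^n$ for the column vector $(V_i[1],\dots,V_i[n])^t\in\mathbb{F}_2^n$. A rate $R\ge 0$ is achievable with a common compression matrix if for every $\epsilon>0$ and all sufficiently large $n$ there exist a single binary matrix $B$ of size $\lceil nR\rceil\times n$ and a decoding map $g$ such that $\Pr\big[g(BV_1^n,\dots,BV_r^n)\neq (V_1^n,\dots,V_r^n)\big]\le\epsilon$, where the products $BV_i^n$ are computed over $\mathbb{F}_2$. $R^{s.c.}_{SW}$ (Slepian–Wolf with the same compression matrices) denotes the infimum of all rates achievable with a common compression matrix. $H(\cdot)$ denotes Shannon entropy in bits. *)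

theory Defs
  imports Complex_Main "HOL-Library.FuncSet"
begin

text \<open>Binary values are encoded as bool (True = 1, False = 0); addition modulo 2 is (\<noteq>).
  A joint law of (V1,V2) is a function p :: bool \<Rightarrow> bool \<Rightarrow> real.\<close>

definition is_joint_pmf :: "(bool \<Rightarrow> bool \<Rightarrow> real) \<Rightarrow> bool" where
  "is_joint_pmf p \<longleftrightarrow> (\<forall>a b. p a b \<ge> 0) \<and> (\<Sum>a\<in>UNIV. \<Sum>b\<in>UNIV. p a b) = 1"

definition mat_vec_F2 :: "(nat \<Rightarrow> nat \<Rightarrow> bool) \<Rightarrow> nat \<Rightarrow> nat \<Rightarrow> (nat \<Rightarrow> bool) \<Rightarrow> (nat \<Rightarrow> bool)" where
  "mat_vec_F2 B m n v = (\<lambda>i. if i < m then odd (card {j\<in>{..<n}. B i j \<and> v j}) else False)"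

text \<open>Block error probability of the scheme (B, g) with m rows at blocklength n, for i.i.d.
  pairs (V1[t],V2[t]) with law p. A realization is x :: nat \<Rightarrow> bool \<times> bool on {..<n};
  V1^n = fst \<circ> x, V2^n = snd \<circ> x.\<close>
definition err_prob ::
  "(bool \<Rightarrow> bool \<Rightarrow> real) \<Rightarrow> nat \<Rightarrow> nat \<Rightarrow> (nat \<Rightarrow> nat \<Rightarrow> bool)
    \<Rightarrow> ((nat \<Rightarrow> bool) \<Rightarrow> (nat \<Rightarrow> bool) \<Rightarrow> (nat \<Rightarrow> bool \<times> bool)) \<Rightarrow> real" where
  "err_prob p n m B g =
     (\<Sum>x\<in>{..<n} \<rightarrow>\<^sub>E (UNIV :: (bool \<times> bool) set).
        (if (\<forall>t<n. g (mat_vec_F2 B m n (fst \<circ> x)) (mat_vec_F2 B m n (snd \<circ> x)) t = x t)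
         then 0 else (\<Prod>t<n. p (fst (x t)) (snd (x t)))))"

definition achievable_common :: "(bool \<Rightarrow> bool \<Rightarrow> real) \<Rightarrow> real \<Rightarrow> bool" where
  "achievable_common p R \<longleftrightarrow> R \<ge> 0 \<and>
     (\<forall>\<epsilon>>0. \<exists>N. \<forall>n\<ge>N. \<exists>B g. err_prob p n (nat \<lceil>real n * R\<rceil>) B g \<le> \<epsilon>)"

definition R_SW_sc :: "(bool \<Rightarrow> bool \<Rightarrow> real) \<Rightarrow> real" where
  "R_SW_sc p = Inf {R. achievable_common p R}"

definition plogp :: "real \<Rightarrow> real" where
  "plogp x = (if x = 0 then 0 else x * log 2 x)"

definition law_K :: "(bool \<Rightarrow> bool \<Rightarrow> real) \<Rightarrow> bool \<Rightarrow> real" where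
  "law_K p k = (\<Sum>a\<in>UNIV. \<Sum>b\<in>UNIV. if (a \<noteq> b) = k then p a b else 0)"

definition law_V1K :: "(bool \<Rightarrow> bool \<Rightarrow> real) \<Rightarrow> bool \<Rightarrow> bool \<Rightarrow> real" where
  "law_V1K p a k = (\<Sum>b\<in>UNIV. if (a \<noteq> b) = k then p a b else 0)"

definition entropy_K :: "(bool \<Rightarrow> bool \<Rightarrow> real) \<Rightarrow> real" where
  "entropy_K p = - (\<Sum>k\<in>UNIV. plogp (law_K p k))"

definition cond_entropy_V1_K :: "(bool \<Rightarrow> bool \<Rightarrow> real) \<Rightarrow> real" where
  "cond_entropy_V1_K p = - (\<Sum>a\<in>UNIV. \<Sum>k\<in>UNIV.
      (if law_V1K p a k = 0 then 0 else law_V1K p a k * log 2 (law_V1K p a k / law_K p k)))"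

end

theory Submission
  imports Defs
begin

definition Vn :: "nat \<Rightarrow> (nat \<Rightarrow> bool) set" where
  "Vn n = {..<n} \<rightarrow>\<^sub>E (UNIV :: bool set)"

definition Bs :: "nat \<Rightarrow> nat \<Rightarrow> (nat \<Rightarrow> nat \<Rightarrow> bool) set" where
  "Bs m n = {..<m} \<rightarrow>\<^sub>E Vn n"

lemma finite_Vn[simp]: "finite (Vn n)"
  by (simp add: Vn_def finite_PiE)

lemma card_Vn: "card (Vn n) = 2 ^ n"
  by (simp add: Vn_def card_PiE)

lemma finite_Bs[simp]: "finite (Bs m n)"
  by (simp add: Bs_def finite_PiE)

lemma card_Bs: "card (Bs m n) = (2 ^ n) ^ m"
  by (simp add: Bs_def card_PiE card_Vn)

lemma parity_xor:
  fixes r u v :: "nat \<Rightarrow> bool" and n :: nat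
  shows
  "(odd (card {j\<in>{..<n}. r j \<and> u j}) = odd (card {j\<in>{..<n}. r j \<and> v j}))
   \<longleftrightarrow> even (card {j\<in>{..<n}. r j \<and> (u j \<noteq> v j)})"
proof -
  define X where "X = {j\<in>{..<n}. r j \<and> u j}"
  define Y where "Y = {j\<in>{..<n}. r j \<and> v j}"
  have fX: "finite X" and fY: "finite Y" unfolding X_def Y_def
    by (rule finite_Collect_conjI, simp)+
  have D: "{j\<in>{..<n}. r j \<and> (u j \<noteq> v j)} = (X \<union> Y) - (X \<inter> Y)"
    by (auto simp: X_def Y_def)
  have c1: "card X + card Y = card (X \<union> Y) + card (X \<inter> Y)"
    using card_Un_Int[OF fX fY] by simp
  have c2: "card ((X \<union> Y) - (X \<inter> Y)) = card (X \<union> Y) - card (X \<inter> Y)"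
    by (rule card_Diff_subset) (use fX fY in auto)
  have c3: "card (X \<inter> Y) \<le> card (X \<union> Y)"
    by (rule card_mono) (use fX fY in auto)
  have e: "card X + card Y = card {j\<in>{..<n}. r j \<and> (u j \<noteq> v j)} + 2 * card (X \<inter> Y)"
    unfolding D using c1 c2 c3 by simp
  have "even (card X + card Y) \<longleftrightarrow> even (card {j\<in>{..<n}. r j \<and> (u j \<noteq> v j)})"
    unfolding e by simp
  then show ?thesis unfolding X_def Y_def by (simp add: even_add)
qed

lemma flip_parity:
  fixes r d :: "nat \<Rightarrow> bool" and n :: nat
  assumes "j0 < n" "d j0"
  shows "odd (card {j\<in>{..<n}. (r(j0 := \<not> r j0)) j \<and> d j}) \<longleftrightarrow> even (card {j\<in>{..<n}. r j \<and> d j})"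
proof -
  define S where "S = {j\<in>{..<n}. r j \<and> d j}"
  have fS: "finite S" unfolding S_def by (rule finite_Collect_conjI) simp
  show ?thesis
  proof (cases "r j0")
    case True
    have "{j\<in>{..<n}. (r(j0 := \<not> r j0)) j \<and> d j} = S - {j0}"
      using True by (auto simp: S_def)
    moreover have "j0 \<in> S" using assms True by (simp add: S_def)
    ultimately have "card {j\<in>{..<n}. (r(j0 := \<not> r j0)) j \<and> d j} = card S - 1"
      "card S \<ge> 1"
      using fS by (auto simp: card_Diff_singleton Suc_le_eq card_gt_0_iff)
    then show ?thesis unfolding S_def[symmetric]
      by (cases "card S") auto
  next
    case False
    have "{j\<in>{..<n}. (r(j0 := \<not> r j0)) j \<and> d j} = insert j0 S"
      using False assms by (auto simp: S_def)
    moreover have "j0 \<notin> S" using False by (simp add: S_def)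
    ultimately have "card {j\<in>{..<n}. (r(j0 := \<not> r j0)) j \<and> d j} = Suc (card S)"
      using fS by simp
    then show ?thesis unfolding S_def[symmetric] by simp
  qed
qed

lemma row_count:
  assumes "j0 < n" "u j0 \<noteq> v j0"
  shows "2 * card {r \<in> Vn n. odd (card {j\<in>{..<n}. r j \<and> u j}) = odd (card {j\<in>{..<n}. r j \<and> v j})} = 2 ^ n"
proof -
  define d where "d = (\<lambda>j. u j \<noteq> v j)"
  define G where "G = {r \<in> Vn n. even (card {j\<in>{..<n}. r j \<and> d j})}"
  define H where "H = {r \<in> Vn n. odd (card {j\<in>{..<n}. r j \<and> d j})}"
  define \<sigma> where "\<sigma> = (\<lambda>r::nat\<Rightarrow>bool. r(j0 := \<not> r j0))"
  have dj: "d j0" using assms by (simp add: d_def)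
  have inv: "\<sigma> (\<sigma> r) = r" for r by (simp add: \<sigma>_def)
  have memV: "r \<in> Vn n \<Longrightarrow> \<sigma> r \<in> Vn n" for r
    using assms(1) by (auto simp: Vn_def \<sigma>_def PiE_iff extensional_def)
  have fp: "odd (card {j\<in>{..<n}. (\<sigma> r) j \<and> d j}) \<longleftrightarrow> even (card {j\<in>{..<n}. r j \<and> d j})" for r
    unfolding \<sigma>_def by (rule flip_parity[of j0 n d r, OF assms(1) dj])
  have fp2: "odd (card {j\<in>{..<n}. r j \<and> d j}) \<longleftrightarrow> even (card {j\<in>{..<n}. (\<sigma> r) j \<and> d j})" for r
    using fp[of "\<sigma> r"] inv by simp
  have GH: "\<sigma> ` G \<subseteq> H"
  proof
    fix y assume "y \<in> \<sigma> ` G"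
    then obtain r where "r \<in> G" "y = \<sigma> r" by auto
    then show "y \<in> H" using fp[of r] memV unfolding G_def H_def by blast
  qed
  have HG: "\<sigma> ` H \<subseteq> G"
  proof
    fix y assume "y \<in> \<sigma> ` H"
    then obtain r where "r \<in> H" "y = \<sigma> r" by auto
    then show "y \<in> G" using fp2[of r] memV unfolding G_def H_def by blast
  qed
  have "bij_betw \<sigma> G H"
  proof (rule bij_betw_byWitness[where f'=\<sigma>])
    show "\<forall>a\<in>G. \<sigma> (\<sigma> a) = a" "\<forall>a'\<in>H. \<sigma> (\<sigma> a') = a'" using inv by auto
  qed (use GH HG in auto)
  then have cGH: "card G = card H" by (rule bij_betw_same_card)
  have "G \<union> H = Vn n" "G \<inter> H = {}" by (auto simp: G_def H_def)
  then have "card G + card H = 2 ^ n"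
    by (metis card_Un_disjoint card_Vn finite_Un finite_Vn)
  moreover have "{r \<in> Vn n. odd (card {j\<in>{..<n}. r j \<and> u j}) = odd (card {j\<in>{..<n}. r j \<and> v j})} = G"
    unfolding G_def d_def by (simp only: parity_xor)
  ultimately show ?thesis using cGH by simp
qed

lemma mat_count:
  assumes "j0 < n" "u j0 \<noteq> v j0"
  shows "card {B \<in> Bs m n. mat_vec_F2 B m n u = mat_vec_F2 B m n v} * 2 ^ m = card (Bs m n)"
proof -
  define G where "G = {r \<in> Vn n. odd (card {j\<in>{..<n}. r j \<and> u j}) = odd (card {j\<in>{..<n}. r j \<and> v j})}"
  have "{B \<in> Bs m n. mat_vec_F2 B m n u = mat_vec_F2 B m n v} = {..<m} \<rightarrow>\<^sub>E G"
  proof (intro set_eqI iffI)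
    fix B assume "B \<in> {B \<in> Bs m n. mat_vec_F2 B m n u = mat_vec_F2 B m n v}"
    then have B: "B \<in> Bs m n" "\<And>i. mat_vec_F2 B m n u i = mat_vec_F2 B m n v i" by auto
    show "B \<in> {..<m} \<rightarrow>\<^sub>E G"
      unfolding PiE_iff
    proof (intro conjI ballI)
      fix i assume i: "i \<in> {..<m}"
      then show "B i \<in> G" using B(1) B(2)[of i] by (auto simp: Bs_def G_def mat_vec_F2_def PiE_iff)
    next
      show "B \<in> extensional {..<m}" using B(1) by (simp add: Bs_def PiE_iff)
    qed
  next
    fix B assume B: "B \<in> {..<m} \<rightarrow>\<^sub>E G"
    have "B \<in> Bs m n" using B unfolding Bs_def PiE_iff G_def by auto
    moreover have "mat_vec_F2 B m n u i = mat_vec_F2 B m n v i" for i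
      using B unfolding mat_vec_F2_def G_def PiE_iff by auto
    ultimately show "B \<in> {B \<in> Bs m n. mat_vec_F2 B m n u = mat_vec_F2 B m n v}" by auto
  qed
  then have "card {B \<in> Bs m n. mat_vec_F2 B m n u = mat_vec_F2 B m n v} = card G ^ m"
    by (simp add: card_PiE)
  moreover have "2 * card G = 2 ^ n" using row_count[of j0 n u v, OF assms] by (simp add: G_def)
  ultimately show ?thesis
    by (simp add: card_Bs power_mult_distrib[symmetric] mult.commute)
qed

definition Kf :: "bool \<times> bool \<Rightarrow> bool" where "Kf a = (fst a \<noteq> snd a)"
definition Xn :: "nat \<Rightarrow> (nat \<Rightarrow> bool \<times> bool) set" where
  "Xn n = {..<n} \<rightarrow>\<^sub>E (UNIV :: (bool \<times> bool) set)"
definition pp :: "(bool \<Rightarrow> bool \<Rightarrow> real) \<Rightarrow> bool \<times> bool \<Rightarrow> real" where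
  "pp p a = p (fst a) (snd a)"
definition qx :: "(bool \<Rightarrow> bool \<Rightarrow> real) \<Rightarrow> nat \<Rightarrow> (nat \<Rightarrow> bool \<times> bool) \<Rightarrow> real" where
  "qx p n x = (\<Prod>t<n. pp p (x t))"
definition qk :: "(bool \<Rightarrow> bool \<Rightarrow> real) \<Rightarrow> nat \<Rightarrow> (nat \<Rightarrow> bool) \<Rightarrow> real" where
  "qk p n k = (\<Prod>t<n. law_K p (k t))"
definition SX :: "nat \<Rightarrow> (nat \<Rightarrow> bool \<times> bool) \<Rightarrow> (nat \<Rightarrow> bool \<times> bool) set" where
  "SX n x = {x' \<in> Xn n. \<forall>t<n. Kf (x' t) = Kf (x t)}"

definition dec :: "(bool \<Rightarrow> bool \<Rightarrow> real) \<Rightarrow> nat \<Rightarrow> nat \<Rightarrow> (nat \<Rightarrow> nat \<Rightarrow> bool)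
    \<Rightarrow> (nat \<Rightarrow> bool) \<Rightarrow> (nat \<Rightarrow> bool) \<Rightarrow> (nat \<Rightarrow> bool \<times> bool)" where
  "dec p n m B s1 s2 = (let s = (\<lambda>i. s1 i \<noteq> s2 i);
     SK = {k \<in> Vn n. mat_vec_F2 B m n k = s};
     kh = (SOME k. k \<in> SK \<and> (\<forall>k'\<in>SK. qk p n k' \<le> qk p n k));
     SX' = {x \<in> Xn n. (\<forall>t<n. Kf (x t) = kh t) \<and> mat_vec_F2 B m n (fst \<circ> x) = s1}
   in (SOME x. x \<in> SX' \<and> (\<forall>x'\<in>SX'. qx p n x' \<le> qx p n x)))"

definition EA :: "(bool \<Rightarrow> bool \<Rightarrow> real) \<Rightarrow> nat \<Rightarrow> nat \<Rightarrow> (nat \<Rightarrow> nat \<Rightarrow> bool) \<Rightarrow> (nat \<Rightarrow> bool \<times> bool) \<Rightarrow> bool" where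
  "EA p n m B x = (\<exists>k\<in>Vn n. (\<exists>j<n. k j \<noteq> Kf (x j)) \<and> qk p n k \<ge> qk p n (\<lambda>t. Kf (x t))
        \<and> mat_vec_F2 B m n k = mat_vec_F2 B m n (\<lambda>t. Kf (x t)))"

definition EC :: "(bool \<Rightarrow> bool \<Rightarrow> real) \<Rightarrow> nat \<Rightarrow> nat \<Rightarrow> (nat \<Rightarrow> nat \<Rightarrow> bool) \<Rightarrow> (nat \<Rightarrow> bool \<times> bool) \<Rightarrow> bool" where
  "EC p n m B x = (\<exists>x'\<in>SX n x. (\<exists>j<n. (fst \<circ> x') j \<noteq> (fst \<circ> x) j) \<and> qx p n x' \<ge> qx p n x
        \<and> mat_vec_F2 B m n (fst \<circ> x') = mat_vec_F2 B m n (fst \<circ> x))"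

lemma finite_Xn[simp]: "finite (Xn n)" by (simp add: Xn_def finite_PiE)

lemma mat_vec_cong: "(\<And>j. j < n \<Longrightarrow> u j = v j) \<Longrightarrow> mat_vec_F2 B m n u = mat_vec_F2 B m n v"
proof -
  assume h: "\<And>j. j < n \<Longrightarrow> u j = v j"
  have "\<And>i. {j\<in>{..<n}. B i j \<and> u j} = {j\<in>{..<n}. B i j \<and> v j}" using h by auto
  then show ?thesis unfolding mat_vec_F2_def by simp
qed

lemma mat_vec_xor:
  "mat_vec_F2 B m n (\<lambda>j. u j \<noteq> v j) = (\<lambda>i. mat_vec_F2 B m n u i \<noteq> mat_vec_F2 B m n v i)"
  unfolding mat_vec_F2_def using parity_xor[of n "B i" u v for i] by (auto simp: fun_eq_iff)

lemma exists_max: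
  fixes w :: "'a \<Rightarrow> real"
  assumes "finite S" "a \<in> S"
  shows "\<exists>x. x \<in> S \<and> (\<forall>y\<in>S. w y \<le> w x)"
proof -
  have ne: "w ` S \<noteq> {}" using assms by auto
  obtain x where "x \<in> S" "w x = Max (w ` S)" using Max_in[OF finite_imageI[OF assms(1)] ne] by auto
  then show ?thesis using assms(1) by (metis Max_ge finite_imageI imageI)
qed

lemma dec_correct:
  assumes x: "x \<in> Xn n" and nA: "\<not> EA p n m B x" and nC: "\<not> EC p n m B x"
  shows "\<forall>t<n. dec p n m B (mat_vec_F2 B m n (fst \<circ> x)) (mat_vec_F2 B m n (snd \<circ> x)) t = x t"
proof -
  define s1 where "s1 = mat_vec_F2 B m n (fst \<circ> x)"
  define s2 where "s2 = mat_vec_F2 B m n (snd \<circ> x)"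
  define s where "s = (\<lambda>i. s1 i \<noteq> s2 i)"
  define SK where "SK = {k \<in> Vn n. mat_vec_F2 B m n k = s}"
  define kh where "kh = (SOME k. k \<in> SK \<and> (\<forall>k'\<in>SK. qk p n k' \<le> qk p n k))"
  define SX' where "SX' = {x \<in> Xn n. (\<forall>t<n. Kf (x t) = kh t) \<and> mat_vec_F2 B m n (fst \<circ> x) = s1}"
  define xh where "xh = (SOME x. x \<in> SX' \<and> (\<forall>x'\<in>SX'. qx p n x' \<le> qx p n x))"
  have dec_eq: "dec p n m B s1 s2 = xh"
    unfolding dec_def xh_def SX'_def kh_def SK_def s_def Let_def by simp
  define kk where "kk = restrict (\<lambda>t. Kf (x t)) {..<n}"
  have mvk: "mat_vec_F2 B m n (\<lambda>t. Kf (x t)) = s"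
    unfolding s_def s1_def s2_def Kf_def using mat_vec_xor[of B m n "fst \<circ> x" "snd \<circ> x"] by simp
  have kkS: "kk \<in> SK"
  proof -
    have "mat_vec_F2 B m n kk = mat_vec_F2 B m n (\<lambda>t. Kf (x t))"
      by (rule mat_vec_cong) (simp add: kk_def)
    then show ?thesis using mvk by (simp add: SK_def kk_def Vn_def)
  qed
  have finSK: "finite SK" by (simp add: SK_def)
  from exists_max[OF finSK kkS, of "qk p n"]
  have khP: "kh \<in> SK \<and> (\<forall>k'\<in>SK. qk p n k' \<le> qk p n kh)"
    unfolding kh_def by (rule someI_ex)
  have qkk: "qk p n kk = qk p n (\<lambda>t. Kf (x t))" unfolding qk_def kk_def by simp
  have kh_eq: "\<forall>j<n. kh j = Kf (x j)"
  proof (rule ccontr)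
    assume "\<not> (\<forall>j<n. kh j = Kf (x j))"
    then have a1: "\<exists>j<n. kh j \<noteq> Kf (x j)" by auto
    have a2: "kh \<in> Vn n" "mat_vec_F2 B m n kh = s" using khP by (auto simp: SK_def)
    have a3: "qk p n kh \<ge> qk p n (\<lambda>t. Kf (x t))" using khP kkS qkk by auto
    have "EA p n m B x" unfolding EA_def
      by (rule bexI[where x=kh]) (simp only: a1 a2 a3 mvk, simp add: a2)
    then show False using nA by simp
  qed
  have xS: "x \<in> SX'" using x kh_eq by (simp add: SX'_def s1_def)
  have finSX: "finite SX'" by (simp add: SX'_def)
  from exists_max[OF finSX xS, of "qx p n"]
  have xhP: "xh \<in> SX' \<and> (\<forall>x'\<in>SX'. qx p n x' \<le> qx p n xh)"
    unfolding xh_def by (rule someI_ex)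
  have xh_in: "xh \<in> SX n x" using xhP kh_eq by (auto simp: SX'_def SX_def)
  have fst_eq: "\<forall>j<n. fst (xh j) = fst (x j)"
  proof (rule ccontr)
    assume "\<not> (\<forall>j<n. fst (xh j) = fst (x j))"
    then have c1: "\<exists>j<n. (fst \<circ> xh) j \<noteq> (fst \<circ> x) j" by auto
    have c2: "qx p n xh \<ge> qx p n x" using xhP xS by auto
    have c3: "mat_vec_F2 B m n (fst \<circ> xh) = mat_vec_F2 B m n (fst \<circ> x)"
      using xhP by (simp add: SX'_def s1_def)
    have "EC p n m B x" unfolding EC_def
      by (rule bexI[where x=xh]) (simp only: c1 c2 c3, simp add: xh_in)
    then show False using nC by simp
  qed
  have "\<forall>t<n. xh t = x t"
  proof (intro allI impI)
    fix t assume t: "t < n"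
    have "Kf (xh t) = Kf (x t)" using xh_in t by (simp add: SX_def)
    moreover have "fst (xh t) = fst (x t)" using fst_eq t by blast
    ultimately show "xh t = x t" unfolding Kf_def by (cases "xh t", cases "x t") auto
  qed
  then show ?thesis using dec_eq s1_def s2_def by simp
qed

lemma union_count:
  fixes S :: "'a set" and f :: "'a \<Rightarrow> nat \<Rightarrow> bool" and w :: "'a \<Rightarrow> real"
  assumes "finite S"
  shows "real (card {B \<in> Bs m n. \<exists>y\<in>S. (\<exists>j<n. f y j \<noteq> u j) \<and> w y \<ge> w0 \<and>
            mat_vec_F2 B m n (f y) = mat_vec_F2 B m n u})
         \<le> real (card (Bs m n)) * min 1 (real (card {y\<in>S. w y \<ge> w0}) / 2 ^ m)"
proof -
  define E where "E = {B \<in> Bs m n. \<exists>y\<in>S. (\<exists>j<n. f y j \<noteq> u j) \<and> w y \<ge> w0 \<and>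
            mat_vec_F2 B m n (f y) = mat_vec_F2 B m n u}"
  define T where "T = {y\<in>S. w y \<ge> w0 \<and> (\<exists>j<n. f y j \<noteq> u j)}"
  define F where "F = (\<lambda>y. {B \<in> Bs m n. mat_vec_F2 B m n (f y) = mat_vec_F2 B m n u})"
  have finT: "finite T" using assms by (simp add: T_def)
  have c1: "card E \<le> card (Bs m n)" by (rule card_mono) (auto simp: E_def)
  have "E \<subseteq> (\<Union>y\<in>T. F y)" by (auto simp: E_def T_def F_def)
  then have "card E \<le> card (\<Union>y\<in>T. F y)"
    by (intro card_mono) (auto simp: F_def finT)
  also have "\<dots> \<le> (\<Sum>y\<in>T. card (F y))" by (rule card_UN_le[OF finT])
  finally have "card E \<le> (\<Sum>y\<in>T. card (F y))" .
  then have "real (card E) \<le> real (\<Sum>y\<in>T. card (F y))" by (simp only: of_nat_le_iff)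
  then have c2: "real (card E) \<le> (\<Sum>y\<in>T. real (card (F y)))" by (simp only: of_nat_sum)
  have Fy: "real (card (F y)) = real (card (Bs m n)) / 2 ^ m" if yT: "y \<in> T" for y
  proof -
    obtain j where "j < n" "f y j \<noteq> u j" using yT by (auto simp: T_def)
    from mat_count[of j n "f y" u m, OF this] have "card (F y) * 2 ^ m = card (Bs m n)" by (simp add: F_def)
    then have "real (card (F y) * 2 ^ m) = real (card (Bs m n))" by (simp only:)
    then have "real (card (F y)) * 2 ^ m = real (card (Bs m n))" by simp
    then show ?thesis by (simp add: field_simps)
  qed
  have "(\<Sum>y\<in>T. real (card (F y))) = real (card T) * (real (card (Bs m n)) / 2 ^ m)"
    using Fy by simp
  also have "\<dots> \<le> real (card {y\<in>S. w y \<ge> w0}) * (real (card (Bs m n)) / 2 ^ m)"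
    by (intro mult_right_mono) (auto simp: T_def intro!: card_mono assms)
  finally have c3': "(\<Sum>y\<in>T. real (card (F y))) \<le> real (card {y\<in>S. w y \<ge> w0}) * (real (card (Bs m n)) / 2 ^ m)" .
  have eqm: "real (card {y\<in>S. w y \<ge> w0}) * (real (card (Bs m n)) / 2 ^ m) = real (card (Bs m n)) * (real (card {y\<in>S. w y \<ge> w0}) / 2 ^ m)"
    by simp
  have c3: "real (card E) \<le> real (card (Bs m n)) * (real (card {y\<in>S. w y \<ge> w0}) / 2 ^ m)"
    using order_trans[OF c2 c3'] unfolding eqm .
  have c1': "real (card E) \<le> real (card (Bs m n)) * 1" using c1 by simp
  show ?thesis unfolding E_def[symmetric]
    by (cases "1 \<le> real (card {y\<in>S. w y \<ge> w0}) / 2 ^ m") (use c1' c3 in \<open>simp_all add: min_def\<close>)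
qed

lemma card_heavy:
  fixes w :: "'a \<Rightarrow> real"
  assumes "finite S" "w0 > 0" "\<And>y. y \<in> S \<Longrightarrow> w y \<ge> 0"
  shows "real (card {y\<in>S. w y \<ge> w0}) \<le> (\<Sum>y\<in>S. w y) / w0"
proof -
  have "real (card {y\<in>S. w y \<ge> w0}) * w0 = (\<Sum>y\<in>{y\<in>S. w y \<ge> w0}. w0)" by simp
  also have "\<dots> \<le> (\<Sum>y\<in>{y\<in>S. w y \<ge> w0}. w y)" by (rule sum_mono) auto
  also have "\<dots> \<le> (\<Sum>y\<in>S. w y)" by (rule sum_mono2) (use assms in auto)
  finally show ?thesis using assms(2) by (simp add: field_simps)
qed

lemma UNIV_pairs: "(UNIV::(bool\<times>bool) set) = {(True,True),(True,False),(False,True),(False,False)}"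
  by auto

lemma sum_pairs: "(\<Sum>a\<in>(UNIV::(bool\<times>bool) set). f a) = f (True,True) + f (True,False) + f (False,True) + f (False,False)"
  unfolding UNIV_pairs by (simp add: add.assoc)

lemma pp_nonneg: "is_joint_pmf p \<Longrightarrow> pp p a \<ge> 0"
  by (simp add: is_joint_pmf_def pp_def)

lemma pp_sum: "is_joint_pmf p \<Longrightarrow> (\<Sum>a\<in>UNIV. pp p a) = 1"
  unfolding is_joint_pmf_def sum_pairs pp_def by (simp add: UNIV_bool algebra_simps)

lemma law_K_True: "law_K p True = p True False + p False True"
  by (simp add: law_K_def UNIV_bool)
lemma law_K_False: "law_K p False = p True True + p False False"
  by (simp add: law_K_def UNIV_bool)



lemma law_K_fiber: "(\<Sum>a\<in>{a. Kf a = c}. pp p a) = law_K p c"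
proof (cases c)
  case True
  have "{a. Kf a = c} = {(True,False),(False,True)}" using True by (auto simp: Kf_def)
  then show ?thesis using True by (simp add: pp_def law_K_True)
next
  case False
  have "{a. Kf a = c} = {(True,True),(False,False)}" using False by (auto simp: Kf_def)
  then show ?thesis using False by (simp add: pp_def law_K_False)
qed

lemma law_K_nonneg: "is_joint_pmf p \<Longrightarrow> law_K p c \<ge> 0"
  unfolding law_K_fiber[symmetric] by (rule sum_nonneg) (simp add: pp_nonneg)

lemma law_K_sum1: assumes "is_joint_pmf p" shows "(\<Sum>c\<in>UNIV. law_K p c) = 1"
proof -
  have "(\<Sum>c\<in>UNIV. law_K p c) = (\<Sum>a\<in>UNIV. pp p a)"
    unfolding sum_pairs by (simp add: UNIV_bool law_K_True law_K_False pp_def)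
  then show ?thesis using pp_sum[OF assms] by simp
qed

lemma law_K_ge: "is_joint_pmf p \<Longrightarrow> law_K p (Kf a) \<ge> pp p a"
  unfolding law_K_fiber[symmetric]
  by (rule member_le_sum) (auto simp: pp_nonneg)

lemma sum_Xn_prod: fixes h :: "bool \<times> bool \<Rightarrow> real" shows "(\<Sum>x\<in>Xn n. \<Prod>t<n. h (x t)) = (\<Sum>a\<in>UNIV. h a) ^ n"
proof -
  have "(\<Prod>t<n. \<Sum>a\<in>(UNIV::(bool\<times>bool) set). h a) = (\<Sum>x\<in>Xn n. \<Prod>t<n. h (x t))"
    unfolding Xn_def using prod_sum_PiE[of "{..<n}" "\<lambda>_. UNIV" "\<lambda>_ a. h a"] by simp
  then show ?thesis by simp
qed

lemma sum_Vn_prod: fixes h :: "bool \<Rightarrow> real" shows "(\<Sum>x\<in>Vn n. \<Prod>t<n. h (x t)) = (\<Sum>a\<in>UNIV. h a) ^ n"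
proof -
  have "(\<Prod>t<n. \<Sum>a\<in>(UNIV::bool set). h a) = (\<Sum>x\<in>Vn n. \<Prod>t<n. h (x t))"
    unfolding Vn_def using prod_sum_PiE[of "{..<n}" "\<lambda>_. UNIV" "\<lambda>_ a. h a"] by simp
  then show ?thesis by simp
qed

lemma sum_qk: "is_joint_pmf p \<Longrightarrow> (\<Sum>k\<in>Vn n. qk p n k) = 1"
  unfolding qk_def sum_Vn_prod by (simp add: law_K_sum1)

lemma SX_PiE: "SX n x = PiE {..<n} (\<lambda>t. {a. Kf a = Kf (x t)})"
proof (rule set_eqI)
  fix y
  have "y \<in> SX n x \<longleftrightarrow> (y \<in> extensional {..<n} \<and> (\<forall>t<n. Kf (y t) = Kf (x t)))"
    unfolding SX_def Xn_def PiE_iff by simp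
  also have "\<dots> \<longleftrightarrow> y \<in> PiE {..<n} (\<lambda>t. {a. Kf a = Kf (x t)})"
    unfolding PiE_iff by auto
  finally show "y \<in> SX n x \<longleftrightarrow> y \<in> PiE {..<n} (\<lambda>t. {a. Kf a = Kf (x t)})" .
qed

lemma sum_SX: "(\<Sum>x'\<in>SX n x. qx p n x') = qk p n (\<lambda>t. Kf (x t))"
proof -
  have "(\<Prod>t<n. \<Sum>a\<in>{a. Kf a = Kf (x t)}. pp p a) = (\<Sum>x'\<in>SX n x. \<Prod>t<n. pp p (x' t))"
    unfolding SX_PiE using prod_sum_PiE[of "{..<n}" "\<lambda>t. {a. Kf a = Kf (x t)}" "\<lambda>_ a. pp p a"] by simp
  then show ?thesis unfolding qx_def qk_def law_K_fiber by simp
qed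

lemma qx_nonneg: "is_joint_pmf p \<Longrightarrow> qx p n x \<ge> 0"
  unfolding qx_def by (rule prod_nonneg) (simp add: pp_nonneg)
lemma qk_nonneg: "is_joint_pmf p \<Longrightarrow> qk p n k \<ge> 0"
  unfolding qk_def by (rule prod_nonneg) (simp add: law_K_nonneg)

lemma qk_pos:
  assumes "is_joint_pmf p" "qx p n x > 0"
  shows "qk p n (\<lambda>t. Kf (x t)) > 0"
proof -
  have "pp p (x t) > 0" if "t < n" for t
  proof -
    have "pp p (x t) \<noteq> 0"
    proof
      assume "pp p (x t) = 0"
      then have "(\<Prod>t<n. pp p (x t)) = 0" using that by (intro prod_zero) auto
      then show False using assms(2) unfolding qx_def by linarith
    qed
    then show ?thesis using pp_nonneg[OF assms(1)] by (simp add: order_less_le)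
  qed
  then have lk: "law_K p (Kf (x t)) > 0" if "t < n" for t
    using law_K_ge[OF assms(1)] that by (meson less_le_trans)
  show ?thesis unfolding qk_def by (rule prod_pos) (simp add: lk)
qed

lemma card_EA:
  assumes pmf: "is_joint_pmf p" and pos: "qx p n x > 0"
  shows "real (card {B \<in> Bs m n. EA p n m B x}) \<le> real (card (Bs m n)) * min 1 ((1 / qk p n (\<lambda>t. Kf (x t))) / 2 ^ m)"
proof -
  have eq: "{B \<in> Bs m n. EA p n m B x} = {B \<in> Bs m n. \<exists>y\<in>Vn n. (\<exists>j<n. (\<lambda>k. k) y j \<noteq> (\<lambda>t. Kf (x t)) j) \<and> qk p n y \<ge> qk p n (\<lambda>t. Kf (x t)) \<and>
            mat_vec_F2 B m n ((\<lambda>k. k) y) = mat_vec_F2 B m n (\<lambda>t. Kf (x t))}"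
    by (simp add: EA_def)
  have "real (card {B \<in> Bs m n. EA p n m B x}) \<le> real (card (Bs m n)) * min 1 (real (card {y\<in>Vn n. qk p n y \<ge> qk p n (\<lambda>t. Kf (x t))}) / 2 ^ m)"
    unfolding eq by (rule union_count) simp
  also have "\<dots> \<le> real (card (Bs m n)) * min 1 ((1 / qk p n (\<lambda>t. Kf (x t))) / 2 ^ m)"
  proof -
    have "real (card {y\<in>Vn n. qk p n y \<ge> qk p n (\<lambda>t. Kf (x t))}) \<le> (\<Sum>y\<in>Vn n. qk p n y) / qk p n (\<lambda>t. Kf (x t))"
      by (rule card_heavy) (auto simp: qk_pos[OF pmf pos] qk_nonneg[OF pmf])
    then have "real (card {y\<in>Vn n. qk p n y \<ge> qk p n (\<lambda>t. Kf (x t))}) \<le> 1 / qk p n (\<lambda>t. Kf (x t))"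
      by (simp add: sum_qk[OF pmf])
    then show ?thesis
      by (intro mult_left_mono[OF min.mono[OF order_refl divide_right_mono]]) auto
  qed
  finally show ?thesis .
qed

lemma card_EC:
  assumes pmf: "is_joint_pmf p" and pos: "qx p n x > 0"
  shows "real (card {B \<in> Bs m n. EC p n m B x}) \<le> real (card (Bs m n)) * min 1 ((qk p n (\<lambda>t. Kf (x t)) / qx p n x) / 2 ^ m)"
proof -
  have eq: "{B \<in> Bs m n. EC p n m B x} = {B \<in> Bs m n. \<exists>y\<in>SX n x. (\<exists>j<n. (\<lambda>x'. fst \<circ> x') y j \<noteq> (fst \<circ> x) j) \<and> qx p n y \<ge> qx p n x \<and>
            mat_vec_F2 B m n ((\<lambda>x'. fst \<circ> x') y) = mat_vec_F2 B m n (fst \<circ> x)}"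
    by (simp add: EC_def)
  have finSX: "finite (SX n x)" by (simp add: SX_def)
  have "real (card {B \<in> Bs m n. EC p n m B x}) \<le> real (card (Bs m n)) * min 1 (real (card {y\<in>SX n x. qx p n y \<ge> qx p n x}) / 2 ^ m)"
    unfolding eq by (rule union_count[OF finSX])
  also have "\<dots> \<le> real (card (Bs m n)) * min 1 ((qk p n (\<lambda>t. Kf (x t)) / qx p n x) / 2 ^ m)"
  proof -
    have "real (card {y\<in>SX n x. qx p n y \<ge> qx p n x}) \<le> (\<Sum>y\<in>SX n x. qx p n y) / qx p n x"
      by (rule card_heavy[OF finSX pos]) (simp add: qx_nonneg[OF pmf])
    then have "real (card {y\<in>SX n x. qx p n y \<ge> qx p n x}) \<le> qk p n (\<lambda>t. Kf (x t)) / qx p n x"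
      by (simp add: sum_SX)
    then show ?thesis
      by (intro mult_left_mono[OF min.mono[OF order_refl divide_right_mono]]) auto
  qed
  finally show ?thesis .
qed

definition S1 :: "(bool \<Rightarrow> bool \<Rightarrow> real) \<Rightarrow> real \<Rightarrow> real" where
  "S1 p r = (\<Sum>a\<in>UNIV. pp p a * law_K p (Kf a) powr (- r))"
definition S2 :: "(bool \<Rightarrow> bool \<Rightarrow> real) \<Rightarrow> real \<Rightarrow> real" where
  "S2 p r = (\<Sum>a\<in>UNIV. pp p a powr (1 - r) * law_K p (Kf a) powr r)"

lemma err_le:
  assumes pmf: "is_joint_pmf p"
  shows "err_prob p n m B (dec p n m B) \<le>
    (\<Sum>x\<in>Xn n. qx p n x * (of_bool (EA p n m B x) + of_bool (EC p n m B x)))"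
  unfolding err_prob_def Xn_def[symmetric]
proof (rule sum_mono)
  fix x assume x: "x \<in> Xn n"
  have q: "(\<Prod>t<n. p (fst (x t)) (snd (x t))) = qx p n x" by (simp add: qx_def pp_def)
  have qn: "qx p n x \<ge> 0" by (rule qx_nonneg[OF pmf])
  show "(if \<forall>t<n. dec p n m B (mat_vec_F2 B m n (fst \<circ> x)) (mat_vec_F2 B m n (snd \<circ> x)) t = x t
         then 0 else \<Prod>t<n. p (fst (x t)) (snd (x t)))
        \<le> qx p n x * (of_bool (EA p n m B x) + of_bool (EC p n m B x))"
  proof (cases "\<forall>t<n. dec p n m B (mat_vec_F2 B m n (fst \<circ> x)) (mat_vec_F2 B m n (snd \<circ> x)) t = x t")
    case True
    then show ?thesis using qn by simp
  next
    case False
    then have "EA p n m B x \<or> EC p n m B x" using dec_correct[OF x] by blast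
    then have "1 \<le> (of_bool (EA p n m B x) + of_bool (EC p n m B x) :: real)" by auto
    then have le: "qx p n x * 1 \<le> qx p n x * (of_bool (EA p n m B x) + of_bool (EC p n m B x))"
      using qn by (rule mult_left_mono)
    have eq: "(if \<forall>t<n. dec p n m B (mat_vec_F2 B m n (fst \<circ> x)) (mat_vec_F2 B m n (snd \<circ> x)) t = x t
         then 0 else \<Prod>t<n. p (fst (x t)) (snd (x t))) = qx p n x"
      by (subst if_not_P[OF False]) (rule q)
    show ?thesis unfolding eq using le by simp
  qed
qed

lemma min_powr:
  fixes z r :: real
  assumes "0 \<le> z" "0 \<le> r" "r \<le> 1"
  shows "min 1 z \<le> z powr r"
proof (cases "z \<le> 1")
  case True
  show ?thesis
  proof (cases "z = 0")
    case True then show ?thesis by simp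
  next
    case False
    then have "z powr 1 \<le> z powr r" using assms True by (intro powr_mono') auto
    then show ?thesis using assms by (simp add: powr_one)
  qed
next
  case False
  then have "1 \<le> z powr r" using assms by (intro ge_one_powr_ge_zero) auto
  then show ?thesis by simp
qed

lemma alg1:
  fixes Q L r :: real
  assumes "Q > 0" "L > 0"
  shows "Q * ((1 / L) / 2 ^ m) powr r = 2 powr (- (real m * r)) * (Q * L powr (- r))"
proof -
  have "((1 / L) / 2 ^ m) powr r = (1 / L) powr r / (2 ^ m) powr r" by (rule powr_divide)
  also have "(1 / L) powr r = L powr (- r)" by (subst powr_divide) (simp add: powr_minus inverse_eq_divide)
  also have "(2 ^ m :: real) powr r = 2 powr (real m * r)"
    by (simp add: powr_realpow[symmetric] powr_powr)
  finally show ?thesis by (simp add: powr_minus divide_inverse)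
qed

lemma alg2:
  fixes Q L r :: real
  assumes "Q > 0" "L > 0"
  shows "Q * ((L / Q) / 2 ^ m) powr r = 2 powr (- (real m * r)) * (Q powr (1 - r) * L powr r)"
proof -
  have e1: "((L / Q) / 2 ^ m) powr r = (L powr r / Q powr r) / 2 powr (real m * r)"
  proof -
    have "((L / Q) / 2 ^ m) powr r = (L / Q) powr r / (2 ^ m) powr r" by (rule powr_divide)
    also have "(L / Q) powr r = L powr r / Q powr r" by (rule powr_divide)
    also have "(2 ^ m :: real) powr r = 2 powr (real m * r)"
      by (simp add: powr_realpow[symmetric] powr_powr)
    finally show ?thesis .
  qed
  have e2: "Q powr (1 - r) = Q / Q powr r" using assms by (simp add: powr_diff)
  have e3: "(2::real) powr (- (real m * r)) = 1 / 2 powr (real m * r)" by (simp add: powr_minus divide_inverse)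
  have p1: "Q powr r > 0" "(2::real) powr (real m * r) > 0" using assms by auto
  show ?thesis unfolding e1 e2 e3 using p1 by (simp add: field_simps)
qed

lemma term_bound:
  assumes pmf: "is_joint_pmf p" and r1: "0 \<le> r1" "r1 \<le> 1" and r2: "0 \<le> r2" "r2 \<le> 1"
  shows "qx p n x * (min 1 ((1 / qk p n (\<lambda>t. Kf (x t))) / 2 ^ m) + min 1 ((qk p n (\<lambda>t. Kf (x t)) / qx p n x) / 2 ^ m))
    \<le> 2 powr (- (real m * r1)) * (\<Prod>t<n. pp p (x t) * law_K p (Kf (x t)) powr (- r1))
      + 2 powr (- (real m * r2)) * (\<Prod>t<n. pp p (x t) powr (1 - r2) * law_K p (Kf (x t)) powr r2)"
proof (cases "qx p n x = 0")
  case True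
  have "0 \<le> (\<Prod>t<n. pp p (x t) * law_K p (Kf (x t)) powr (- r1))"
    by (intro prod_nonneg mult_nonneg_nonneg pp_nonneg[OF pmf]) simp
  moreover have "0 \<le> (\<Prod>t<n. pp p (x t) powr (1 - r2) * law_K p (Kf (x t)) powr r2)"
    by (intro prod_nonneg mult_nonneg_nonneg) simp_all
  ultimately show ?thesis using True by simp
next
  case False
  define Q where "Q = qx p n x"
  define L where "L = qk p n (\<lambda>t. Kf (x t))"
  have Qp: "Q > 0" using False qx_nonneg[OF pmf] by (simp add: Q_def order_less_le)
  have Lp: "L > 0" unfolding L_def by (rule qk_pos[OF pmf Qp[unfolded Q_def]])
  have t1: "Q * min 1 ((1 / L) / 2 ^ m) \<le> Q * ((1 / L) / 2 ^ m) powr r1"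
    using Qp Lp r1 by (intro mult_left_mono min_powr) auto
  have t2: "Q * min 1 ((L / Q) / 2 ^ m) \<le> Q * ((L / Q) / 2 ^ m) powr r2"
    using Qp Lp r2 by (intro mult_left_mono min_powr) auto
  have P1: "Q * L powr (- r1) = (\<Prod>t<n. pp p (x t) * law_K p (Kf (x t)) powr (- r1))"
    unfolding Q_def L_def qx_def qk_def prod_powr_distrib prod.distrib ..
  have P2: "Q powr (1 - r2) * L powr r2 = (\<Prod>t<n. pp p (x t) powr (1 - r2) * law_K p (Kf (x t)) powr r2)"
    unfolding Q_def L_def qx_def qk_def prod_powr_distrib prod.distrib ..
  have "Q * (min 1 ((1 / L) / 2 ^ m) + min 1 ((L / Q) / 2 ^ m))
      = Q * min 1 ((1 / L) / 2 ^ m) + Q * min 1 ((L / Q) / 2 ^ m)" by (simp add: distrib_left)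
  also have "\<dots> \<le> Q * ((1 / L) / 2 ^ m) powr r1 + Q * ((L / Q) / 2 ^ m) powr r2"
    using t1 t2 by simp
  also have "\<dots> = 2 powr (- (real m * r1)) * (Q * L powr (- r1)) + 2 powr (- (real m * r2)) * (Q powr (1 - r2) * L powr r2)"
    using alg1[OF Qp Lp] alg2[OF Qp Lp] by simp
  finally have X: "Q * (min 1 ((1 / L) / 2 ^ m) + min 1 ((L / Q) / 2 ^ m)) \<le> 2 powr (- (real m * r1)) * (Q * L powr (- r1)) + 2 powr (- (real m * r2)) * (Q powr (1 - r2) * L powr r2)" .
  show ?thesis using X unfolding P1 P2 unfolding Q_def L_def .
qed

lemma sum_of_bool_card: "finite A \<Longrightarrow> (\<Sum>B\<in>A. (of_bool (P B) :: real)) = real (card {B\<in>A. P B})"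
  by (simp add: Int_def)

lemma sum_bound:
  assumes pmf: "is_joint_pmf p" and r1: "0 \<le> r1" "r1 \<le> 1" and r2: "0 \<le> r2" "r2 \<le> 1"
  shows "(\<Sum>B\<in>Bs m n. err_prob p n m B (dec p n m B))
    \<le> real (card (Bs m n)) * (2 powr (- (real m * r1)) * S1 p r1 ^ n + 2 powr (- (real m * r2)) * S2 p r2 ^ n)"
proof -
  let ?C = "real (card (Bs m n))"
  have "(\<Sum>B\<in>Bs m n. err_prob p n m B (dec p n m B))
      \<le> (\<Sum>B\<in>Bs m n. \<Sum>x\<in>Xn n. qx p n x * (of_bool (EA p n m B x) + of_bool (EC p n m B x)))"
    by (rule sum_mono) (rule err_le[OF pmf])
  also have "\<dots> = (\<Sum>x\<in>Xn n. \<Sum>B\<in>Bs m n. qx p n x * (of_bool (EA p n m B x) + of_bool (EC p n m B x)))"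
    by (rule sum.swap)
  also have "\<dots> = (\<Sum>x\<in>Xn n. qx p n x * (real (card {B\<in>Bs m n. EA p n m B x}) + real (card {B\<in>Bs m n. EC p n m B x})))"
    by (simp add: sum_distrib_left[symmetric] sum.distrib sum_of_bool_card del: sum_of_bool_eq)
  also have "\<dots> \<le> (\<Sum>x\<in>Xn n. ?C * (2 powr (- (real m * r1)) * (\<Prod>t<n. pp p (x t) * law_K p (Kf (x t)) powr (- r1))
      + 2 powr (- (real m * r2)) * (\<Prod>t<n. pp p (x t) powr (1 - r2) * law_K p (Kf (x t)) powr r2)))"
  proof (rule sum_mono)
    fix x assume x: "x \<in> Xn n"
    show "qx p n x * (real (card {B\<in>Bs m n. EA p n m B x}) + real (card {B\<in>Bs m n. EC p n m B x}))
      \<le> ?C * (2 powr (- (real m * r1)) * (\<Prod>t<n. pp p (x t) * law_K p (Kf (x t)) powr (- r1))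
      + 2 powr (- (real m * r2)) * (\<Prod>t<n. pp p (x t) powr (1 - r2) * law_K p (Kf (x t)) powr r2))"
    proof (cases "qx p n x = 0")
      case True
      have "0 \<le> (\<Prod>t<n. pp p (x t) * law_K p (Kf (x t)) powr (- r1))"
        by (intro prod_nonneg mult_nonneg_nonneg pp_nonneg[OF pmf]) simp
      moreover have "0 \<le> (\<Prod>t<n. pp p (x t) powr (1 - r2) * law_K p (Kf (x t)) powr r2)"
        by (intro prod_nonneg mult_nonneg_nonneg) simp_all
      ultimately show ?thesis using True by simp
    next
      case False
      then have pos: "qx p n x > 0" using qx_nonneg[OF pmf] by (simp add: order_less_le)
      have "qx p n x * (real (card {B\<in>Bs m n. EA p n m B x}) + real (card {B\<in>Bs m n. EC p n m B x}))
         \<le> qx p n x * (?C * min 1 ((1 / qk p n (\<lambda>t. Kf (x t))) / 2 ^ m)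
                      + ?C * min 1 ((qk p n (\<lambda>t. Kf (x t)) / qx p n x) / 2 ^ m))"
        using card_EA[OF pmf pos, of m] card_EC[OF pmf pos, of m] pos
        by (intro mult_left_mono add_mono) auto
      also have "\<dots> = ?C * (qx p n x * (min 1 ((1 / qk p n (\<lambda>t. Kf (x t))) / 2 ^ m) + min 1 ((qk p n (\<lambda>t. Kf (x t)) / qx p n x) / 2 ^ m)))"
        by (simp add: algebra_simps)
      also have "\<dots> \<le> ?C * (2 powr (- (real m * r1)) * (\<Prod>t<n. pp p (x t) * law_K p (Kf (x t)) powr (- r1))
      + 2 powr (- (real m * r2)) * (\<Prod>t<n. pp p (x t) powr (1 - r2) * law_K p (Kf (x t)) powr r2))"
        by (intro mult_left_mono term_bound[OF pmf r1 r2]) simp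
      finally show ?thesis .
    qed
  qed
  also have "\<dots> = ?C * (2 powr (- (real m * r1)) * (\<Sum>x\<in>Xn n. \<Prod>t<n. pp p (x t) * law_K p (Kf (x t)) powr (- r1))
      + 2 powr (- (real m * r2)) * (\<Sum>x\<in>Xn n. \<Prod>t<n. pp p (x t) powr (1 - r2) * law_K p (Kf (x t)) powr r2))"
    by (simp add: sum_distrib_left sum.distrib distrib_left)
  also have "\<dots> = ?C * (2 powr (- (real m * r1)) * S1 p r1 ^ n + 2 powr (- (real m * r2)) * S2 p r2 ^ n)"
    using sum_Xn_prod[of "\<lambda>a. pp p a * law_K p (Kf a) powr (- r1)" n]
      sum_Xn_prod[of "\<lambda>a. pp p a powr (1 - r2) * law_K p (Kf a) powr r2" n]
    unfolding S1_def S2_def by simp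
  finally show ?thesis .
qed

lemma exists_good_B:
  assumes pmf: "is_joint_pmf p" and r1: "0 \<le> r1" "r1 \<le> 1" and r2: "0 \<le> r2" "r2 \<le> 1"
  shows "\<exists>B g. err_prob p n m B g \<le> 2 powr (- (real m * r1)) * S1 p r1 ^ n + 2 powr (- (real m * r2)) * S2 p r2 ^ n"
proof (rule ccontr)
  let ?b = "2 powr (- (real m * r1)) * S1 p r1 ^ n + 2 powr (- (real m * r2)) * S2 p r2 ^ n"
  assume "\<not> ?thesis"
  then have gt: "\<And>B. ?b < err_prob p n m B (dec p n m B)" by (meson not_le)
  have ne: "Bs m n \<noteq> {}" using card_Bs[of m n] by (metis card.empty power_not_zero zero_neq_numeral)
  have "(\<Sum>B\<in>Bs m n. ?b) < (\<Sum>B\<in>Bs m n. err_prob p n m B (dec p n m B))"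
    by (rule sum_strict_mono) (use ne gt in auto)
  then have "real (card (Bs m n)) * ?b < (\<Sum>B\<in>Bs m n. err_prob p n m B (dec p n m B))" by simp
  then show False using sum_bound[OF pmf r1 r2, where m=m and n=n] by linarith
qed

lemma S1_exp:
  assumes pmf: "is_joint_pmf p"
  shows "2 powr (- (R * r)) * S1 p r =
    exp (- (R * r) * ln 2) * (\<Sum>a\<in>UNIV. if pp p a = 0 then 0 else pp p a * exp (- r * ln (law_K p (Kf a))))"
proof -
  have "pp p a * law_K p (Kf a) powr (- r) = (if pp p a = 0 then 0 else pp p a * exp (- r * ln (law_K p (Kf a))))" for a
  proof (cases "pp p a = 0")
    case False
    then have "law_K p (Kf a) > 0" using pp_nonneg[OF pmf, of a] law_K_ge[OF pmf, of a] by linarith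
    then show ?thesis using False by (simp add: powr_def)
  qed simp
  then show ?thesis unfolding S1_def by (simp add: powr_def)
qed

lemma S2_exp:
  assumes pmf: "is_joint_pmf p"
  shows "2 powr (- (R * r)) * S2 p r =
    exp (- (R * r) * ln 2) * (\<Sum>a\<in>UNIV. if pp p a = 0 then 0 else exp ((1 - r) * ln (pp p a) + r * ln (law_K p (Kf a))))"
proof -
  have "pp p a powr (1 - r) * law_K p (Kf a) powr r = (if pp p a = 0 then 0 else exp ((1 - r) * ln (pp p a) + r * ln (law_K p (Kf a))))" for a
  proof (cases "pp p a = 0")
    case False
    then have "law_K p (Kf a) > 0" using pp_nonneg[OF pmf, of a] law_K_ge[OF pmf, of a] by linarith
    then show ?thesis using False by (simp add: powr_def exp_add)
  qed simp
  then show ?thesis unfolding S2_def by (simp add: powr_def)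
qed

lemma deriv1:
  "((\<lambda>r. exp (- (R * r) * ln 2) * (\<Sum>a\<in>UNIV. if pp p a = 0 then 0 else pp p a * exp (- r * ln (law_K p (Kf a)))))
     has_real_derivative
    (- R * ln 2 * (\<Sum>a\<in>UNIV. if pp p a = 0 then 0 else pp p a)
     + (\<Sum>a\<in>UNIV. if pp p a = 0 then 0 else pp p a * (- ln (law_K p (Kf a)))))) (at 0)"
proof -
  have e: "((\<lambda>r. exp (- (R * r) * ln 2)) has_real_derivative (- R * ln 2)) (at 0)"
    by (auto intro!: derivative_eq_intros)
  have s: "((\<lambda>r. \<Sum>a\<in>UNIV. if pp p a = 0 then 0 else pp p a * exp (- r * ln (law_K p (Kf a))))
     has_real_derivative (\<Sum>a\<in>UNIV. if pp p a = 0 then 0 else pp p a * (- ln (law_K p (Kf a))))) (at 0)"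
  proof (rule DERIV_sum)
    fix a :: "bool \<times> bool"
    show "((\<lambda>r. if pp p a = 0 then 0 else pp p a * exp (- r * ln (law_K p (Kf a))))
      has_real_derivative (if pp p a = 0 then 0 else pp p a * (- ln (law_K p (Kf a))))) (at 0)"
      by (cases "pp p a = 0") (auto intro!: derivative_eq_intros)
  qed
  have g0: "(\<Sum>a\<in>UNIV. if pp p a = 0 then 0 else pp p a * exp (- 0 * ln (law_K p (Kf a))))
      = (\<Sum>a\<in>UNIV. if pp p a = 0 then 0 else pp p a)"
    by (rule sum.cong) auto
  show ?thesis by (rule DERIV_cong[OF DERIV_mult[OF e s]]) (simp only: g0, simp)
qed

lemma deriv2:
  "((\<lambda>r. exp (- (R * r) * ln 2) * (\<Sum>a\<in>UNIV. if pp p a = 0 then 0 else exp ((1 - r) * ln (pp p a) + r * ln (law_K p (Kf a)))))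
     has_real_derivative
    (- R * ln 2 * (\<Sum>a\<in>UNIV. if pp p a = 0 then 0 else exp (ln (pp p a)))
     + (\<Sum>a\<in>UNIV. if pp p a = 0 then 0 else exp (ln (pp p a)) * (ln (law_K p (Kf a)) - ln (pp p a))))) (at 0)"
proof -
  have e: "((\<lambda>r. exp (- (R * r) * ln 2)) has_real_derivative (- R * ln 2)) (at 0)"
    by (auto intro!: derivative_eq_intros)
  have s: "((\<lambda>r. \<Sum>a\<in>UNIV. if pp p a = 0 then 0 else exp ((1 - r) * ln (pp p a) + r * ln (law_K p (Kf a))))
     has_real_derivative (\<Sum>a\<in>UNIV. if pp p a = 0 then 0 else exp (ln (pp p a)) * (ln (law_K p (Kf a)) - ln (pp p a)))) (at 0)"
  proof (rule DERIV_sum)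
    fix a :: "bool \<times> bool"
    show "((\<lambda>r. if pp p a = 0 then 0 else exp ((1 - r) * ln (pp p a) + r * ln (law_K p (Kf a))))
      has_real_derivative (if pp p a = 0 then 0 else exp (ln (pp p a)) * (ln (law_K p (Kf a)) - ln (pp p a)))) (at 0)"
      by (cases "pp p a = 0") (auto intro!: derivative_eq_intros simp: algebra_simps)
  qed
  have g0: "(\<Sum>a\<in>UNIV. if pp p a = 0 then 0 else exp ((1 - 0) * ln (pp p a) + 0 * ln (law_K p (Kf a))))
      = (\<Sum>a\<in>UNIV. if pp p a = 0 then 0 else exp (ln (pp p a)))"
    by (rule sum.cong) auto
  show ?thesis by (rule DERIV_cong[OF DERIV_mult[OF e s]]) (simp only: g0, simp)
qed

lemma plogp_ln: "plogp x * ln 2 = x * ln x"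
  by (simp add: plogp_def log_def)

lemma entropy_K_ln: "entropy_K p * ln 2 = - (\<Sum>c\<in>UNIV. law_K p c * ln (law_K p c))"
proof -
  have "entropy_K p * ln 2 = - (\<Sum>c\<in>UNIV. plogp (law_K p c) * ln 2)"
    unfolding entropy_K_def by (simp add: sum_distrib_right)
  then show ?thesis by (simp add: plogp_ln)
qed

lemma sum_pp_lnK: "(\<Sum>a\<in>UNIV. pp p a * ln (law_K p (Kf a))) = (\<Sum>c\<in>UNIV. law_K p c * ln (law_K p c))"
  unfolding sum_pairs by (simp add: UNIV_bool Kf_def pp_def law_K_True law_K_False algebra_simps)

lemma T_ln:
  fixes x L :: real
  assumes "0 \<le> x" "x \<le> L"
  shows "(if x = 0 then 0 else x * log 2 (x / L)) * ln 2 = x * (ln x - ln L)"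
proof (cases "x = 0")
  case False
  then have "x > 0" "L > 0" using assms by auto
  then show ?thesis using False by (simp add: log_def ln_div)
qed simp

lemma law_V1K_vals:
  "law_V1K p True True = p True False" "law_V1K p True False = p True True"
  "law_V1K p False True = p False True" "law_V1K p False False = p False False"
  by (simp_all add: law_V1K_def UNIV_bool)

lemma cond_entropy_ln:
  assumes pmf: "is_joint_pmf p"
  shows "cond_entropy_V1_K p * ln 2 = (\<Sum>a\<in>UNIV. pp p a * (ln (law_K p (Kf a)) - ln (pp p a)))"
proof -
  have nn: "\<And>a b. p a b \<ge> 0" using pmf by (simp add: is_joint_pmf_def)
  have le: "p True False \<le> law_K p True" "p False True \<le> law_K p True"
     "p True True \<le> law_K p False" "p False False \<le> law_K p False"
    using nn by (simp_all add: law_K_True law_K_False)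
  have "cond_entropy_V1_K p * ln 2 = - (\<Sum>a\<in>UNIV. \<Sum>k\<in>UNIV.
      (if law_V1K p a k = 0 then 0 else law_V1K p a k * log 2 (law_V1K p a k / law_K p k)) * ln 2)"
    unfolding cond_entropy_V1_K_def by (simp add: sum_distrib_right)
  also have "\<dots> = - (p True False * (ln (p True False) - ln (law_K p True))
       + p True True * (ln (p True True) - ln (law_K p False))
       + p False True * (ln (p False True) - ln (law_K p True))
       + p False False * (ln (p False False) - ln (law_K p False)))"
  proof -
    have e: "(\<Sum>a\<in>UNIV. \<Sum>k\<in>UNIV. G a k) = G True True + G True False + G False True + G False False"
      for G :: "bool \<Rightarrow> bool \<Rightarrow> real" by (simp add: UNIV_bool add_ac)
    show ?thesis unfolding e law_V1K_vals
      using T_ln[OF nn le(1)] T_ln[OF nn le(2)] T_ln[OF nn le(3)] T_ln[OF nn le(4)]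
      by (simp only:)
  qed
  also have "\<dots> = (\<Sum>a\<in>UNIV. pp p a * (ln (law_K p (Kf a)) - ln (pp p a)))"
    unfolding sum_pairs by (simp add: Kf_def pp_def algebra_simps del: law_K_True law_K_False)
  finally show ?thesis .
qed

lemma good_r1:
  assumes pmf: "is_joint_pmf p" and R: "R > entropy_K p"
  shows "\<exists>r. 0 < r \<and> r \<le> 1 \<and> 2 powr (- (R * r)) * S1 p r < 1"
proof -
  define f where "f = (\<lambda>r. exp (- (R * r) * ln 2) * (\<Sum>a\<in>UNIV. if pp p a = 0 then 0 else pp p a * exp (- r * ln (law_K p (Kf a)))))"
  have s1: "(\<Sum>a\<in>UNIV. if pp p a = 0 then 0 else pp p a) = 1"
  proof -
    have "(\<Sum>a\<in>UNIV. if pp p a = 0 then 0 else pp p a) = (\<Sum>a\<in>UNIV. pp p a)" by (rule sum.cong) auto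
    then show ?thesis using pp_sum[OF pmf] by simp
  qed
  have s2: "(\<Sum>a\<in>UNIV. if pp p a = 0 then 0 else pp p a * (- ln (law_K p (Kf a)))) = entropy_K p * ln 2"
  proof -
    have "(\<Sum>a\<in>UNIV. if pp p a = 0 then 0 else pp p a * (- ln (law_K p (Kf a)))) = - (\<Sum>a\<in>UNIV. pp p a * ln (law_K p (Kf a)))"
      by (simp add: sum_negf[symmetric]) (rule sum.cong, auto)
    then show ?thesis unfolding sum_pp_lnK entropy_K_ln by simp
  qed
  have D: "(f has_real_derivative (- R * ln 2 * 1 + entropy_K p * ln 2)) (at 0)"
    using deriv1[of R p] unfolding f_def s1 s2 .
  have Dn: "- R * ln 2 * 1 + entropy_K p * ln 2 < 0"
  proof -
    have "- R * ln 2 * 1 + entropy_K p * ln 2 = (entropy_K p - R) * ln 2" by (simp add: algebra_simps)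
    moreover have "(entropy_K p - R) * ln 2 < 0" using R by (simp add: mult_neg_pos)
    ultimately show ?thesis by simp
  qed
  obtain d where d: "d > 0" "\<And>h. h > 0 \<Longrightarrow> h < d \<Longrightarrow> f 0 > f (0 + h)"
    using DERIV_neg_dec_right[OF D Dn] by blast
  define h where "h = min (d / 2) 1"
  have h: "h > 0" "h < d" "h \<le> 1" using d(1) by (auto simp: h_def)
  have f0: "f 0 = 1" unfolding f_def
  proof -
    have "(\<Sum>a\<in>UNIV. if pp p a = 0 then 0 else pp p a * exp (- 0 * ln (law_K p (Kf a)))) = (\<Sum>a\<in>UNIV. if pp p a = 0 then 0 else pp p a)"
      by (rule sum.cong) auto
    then show "exp (- (R * 0) * ln 2) * (\<Sum>a\<in>UNIV. if pp p a = 0 then 0 else pp p a * exp (- 0 * ln (law_K p (Kf a)))) = 1"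
      using s1 by simp
  qed
  have "f h < 1" using d(2)[OF h(1) h(2)] f0 by simp
  then have "2 powr (- (R * h)) * S1 p h < 1" unfolding S1_exp[OF pmf] f_def .
  then show ?thesis using h by blast
qed

lemma good_r2:
  assumes pmf: "is_joint_pmf p" and R: "R > cond_entropy_V1_K p"
  shows "\<exists>r. 0 < r \<and> r \<le> 1 \<and> 2 powr (- (R * r)) * S2 p r < 1"
proof -
  define f where "f = (\<lambda>r. exp (- (R * r) * ln 2) * (\<Sum>a\<in>UNIV. if pp p a = 0 then 0 else exp ((1 - r) * ln (pp p a) + r * ln (law_K p (Kf a)))))"
  have ex: "exp (ln (pp p a)) = pp p a" if "pp p a \<noteq> 0" for a
    using that pp_nonneg[OF pmf, of a] by simp
  have s1: "(\<Sum>a\<in>UNIV. if pp p a = 0 then 0 else exp (ln (pp p a))) = 1"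
  proof -
    have "(\<Sum>a\<in>UNIV. if pp p a = 0 then 0 else exp (ln (pp p a))) = (\<Sum>a\<in>UNIV. pp p a)"
      by (rule sum.cong) (auto simp: ex)
    then show ?thesis using pp_sum[OF pmf] by simp
  qed
  have s2: "(\<Sum>a\<in>UNIV. if pp p a = 0 then 0 else exp (ln (pp p a)) * (ln (law_K p (Kf a)) - ln (pp p a))) = cond_entropy_V1_K p * ln 2"
  proof -
    have "(\<Sum>a\<in>UNIV. if pp p a = 0 then 0 else exp (ln (pp p a)) * (ln (law_K p (Kf a)) - ln (pp p a)))
       = (\<Sum>a\<in>UNIV. pp p a * (ln (law_K p (Kf a)) - ln (pp p a)))"
      by (rule sum.cong) (auto simp: ex)
    then show ?thesis using cond_entropy_ln[OF pmf] by simp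
  qed
  have D: "(f has_real_derivative (- R * ln 2 * 1 + cond_entropy_V1_K p * ln 2)) (at 0)"
    using deriv2[of R p] unfolding f_def s1 s2 .
  have Dn: "- R * ln 2 * 1 + cond_entropy_V1_K p * ln 2 < 0"
  proof -
    have "- R * ln 2 * 1 + cond_entropy_V1_K p * ln 2 = (cond_entropy_V1_K p - R) * ln 2" by (simp add: algebra_simps)
    moreover have "(cond_entropy_V1_K p - R) * ln 2 < 0" using R by (simp add: mult_neg_pos)
    ultimately show ?thesis by simp
  qed
  obtain d where d: "d > 0" "\<And>h. h > 0 \<Longrightarrow> h < d \<Longrightarrow> f 0 > f (0 + h)"
    using DERIV_neg_dec_right[OF D Dn] by blast
  define h where "h = min (d / 2) 1"
  have h: "h > 0" "h < d" "h \<le> 1" using d(1) by (auto simp: h_def)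
  have f0: "f 0 = 1" unfolding f_def
  proof -
    have "(\<Sum>a\<in>UNIV. if pp p a = 0 then 0 else exp ((1 - 0) * ln (pp p a) + 0 * ln (law_K p (Kf a)))) = (\<Sum>a\<in>UNIV. if pp p a = 0 then 0 else exp (ln (pp p a)))"
      by (rule sum.cong) auto
    then show "exp (- (R * 0) * ln 2) * (\<Sum>a\<in>UNIV. if pp p a = 0 then 0 else exp ((1 - 0) * ln (pp p a) + 0 * ln (law_K p (Kf a)))) = 1"
      using s1 by simp
  qed
  have "f h < 1" using d(2)[OF h(1) h(2)] f0 by simp
  then have "2 powr (- (R * h)) * S2 p h < 1" unfolding S2_exp[OF pmf] f_def .
  then show ?thesis using h by blast
qed

lemma S1_nonneg: "is_joint_pmf p \<Longrightarrow> S1 p r \<ge> 0"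
  unfolding S1_def by (intro sum_nonneg mult_nonneg_nonneg pp_nonneg) simp_all
lemma S2_nonneg: "S2 p r \<ge> 0"
  unfolding S2_def by (intro sum_nonneg mult_nonneg_nonneg) simp_all

lemma pow_bound:
  assumes S: "S \<ge> 0" and r: "r > 0" and m: "real m \<ge> real n * R"
  shows "2 powr (- (real m * r)) * S ^ n \<le> (2 powr (- (R * r)) * S) ^ n"
proof -
  have "2 powr (- (real m * r)) \<le> 2 powr (- (real n * R * r))"
    using m r by (intro powr_mono) (auto intro: mult_right_mono)
  also have "(2::real) powr (- (real n * R * r)) = (2 powr (- (R * r))) ^ n"
  proof -
    have "((2::real) powr (- (R * r))) ^ n = (2 powr (- (R * r))) powr (real n)"
      by (simp add: powr_realpow)
    also have "\<dots> = 2 powr (- (real n * R * r))" by (simp add: powr_powr algebra_simps)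
    finally show ?thesis by simp
  qed
  finally show ?thesis using S by (simp add: power_mult_distrib mult_right_mono)
qed

lemma achievable:
  assumes pmf: "is_joint_pmf p" and R1: "R > entropy_K p" and R2: "R > cond_entropy_V1_K p"
    and R0: "R \<ge> 0"
  shows "achievable_common p R"
proof -
  obtain r1 where r1: "0 < r1" "r1 \<le> 1" "2 powr (- (R * r1)) * S1 p r1 < 1" using good_r1[OF pmf R1] by blast
  obtain r2 where r2: "0 < r2" "r2 \<le> 1" "2 powr (- (R * r2)) * S2 p r2 < 1" using good_r2[OF pmf R2] by blast
  define a1 where "a1 = 2 powr (- (R * r1)) * S1 p r1"
  define a2 where "a2 = 2 powr (- (R * r2)) * S2 p r2"
  have a1: "0 \<le> a1" "a1 < 1" using r1 S1_nonneg[OF pmf] by (auto simp: a1_def)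
  have a2: "0 \<le> a2" "a2 < 1" using r2 S2_nonneg by (auto simp: a2_def)
  show ?thesis unfolding achievable_common_def
  proof (intro conjI allI impI)
    show "0 \<le> R" by (rule R0)
    fix \<epsilon> :: real assume e: "\<epsilon> > 0"
    have l1: "(\<lambda>n. a1 ^ n) \<longlonglongrightarrow> 0" using a1 by (intro LIMSEQ_power_zero) auto
    have l2: "(\<lambda>n. a2 ^ n) \<longlonglongrightarrow> 0" using a2 by (intro LIMSEQ_power_zero) auto
    have "eventually (\<lambda>n. a1 ^ n < \<epsilon> / 2) sequentially"
      using order_tendstoD(2)[OF l1, of "\<epsilon> / 2"] e by simp
    moreover have "eventually (\<lambda>n. a2 ^ n < \<epsilon> / 2) sequentially"
      using order_tendstoD(2)[OF l2, of "\<epsilon> / 2"] e by simp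
    ultimately have "eventually (\<lambda>n. a1 ^ n < \<epsilon> / 2 \<and> a2 ^ n < \<epsilon> / 2) sequentially"
      by (rule eventually_conj)
    then obtain N where N: "\<And>n. n \<ge> N \<Longrightarrow> a1 ^ n < \<epsilon> / 2 \<and> a2 ^ n < \<epsilon> / 2"
      unfolding eventually_sequentially by blast
    show "\<exists>N. \<forall>n\<ge>N. \<exists>B g. err_prob p n (nat \<lceil>real n * R\<rceil>) B g \<le> \<epsilon>"
    proof (rule exI[of _ N], intro allI impI)
      fix n assume n: "N \<le> n"
      define m where "m = nat \<lceil>real n * R\<rceil>"
      have m: "real m \<ge> real n * R" unfolding m_def by linarith
      obtain B g where Bg: "err_prob p n m B g \<le> 2 powr (- (real m * r1)) * S1 p r1 ^ n + 2 powr (- (real m * r2)) * S2 p r2 ^ n"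
        using exists_good_B[OF pmf _ r1(2) _ r2(2), of n m] r1(1) r2(1) by auto
      have "2 powr (- (real m * r1)) * S1 p r1 ^ n \<le> a1 ^ n"
        unfolding a1_def by (rule pow_bound[OF S1_nonneg[OF pmf] r1(1) m])
      moreover have "2 powr (- (real m * r2)) * S2 p r2 ^ n \<le> a2 ^ n"
        unfolding a2_def by (rule pow_bound[OF S2_nonneg r2(1) m])
      ultimately have "err_prob p n m B g \<le> \<epsilon>" using Bg N[OF n] by linarith
      then show "\<exists>B g. err_prob p n (nat \<lceil>real n * R\<rceil>) B g \<le> \<epsilon>" unfolding m_def by blast
    qed
  qed
qed

lemma plogp_nonpos: "0 \<le> x \<Longrightarrow> x \<le> 1 \<Longrightarrow> plogp x \<le> 0"
  unfolding plogp_def by (auto intro!: mult_nonneg_nonpos simp: log_le_zero_cancel_iff)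

lemma entropy_K_nonneg:
  assumes pmf: "is_joint_pmf p"
  shows "entropy_K p \<ge> 0"
proof -
  have le1: "law_K p c \<le> 1" for c
  proof -
    have "law_K p c \<le> (\<Sum>c\<in>UNIV. law_K p c)"
      by (rule member_le_sum) (auto simp: law_K_nonneg[OF pmf])
    then show ?thesis using law_K_sum1[OF pmf] by simp
  qed
  have "(\<Sum>c\<in>UNIV. plogp (law_K p c)) \<le> 0"
    by (rule sum_nonpos) (simp add: plogp_nonpos law_K_nonneg[OF pmf] le1)
  then show ?thesis unfolding entropy_K_def by simp
qed

theorem claim1:
  fixes p :: "bool \<Rightarrow> bool \<Rightarrow> real"
  assumes "is_joint_pmf p"
  shows "R_SW_sc p \<le> max (entropy_K p) (cond_entropy_V1_K p)"
proof -
  let ?M = "max (entropy_K p) (cond_entropy_V1_K p)"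
  have M0: "?M \<ge> 0" using entropy_K_nonneg[OF assms] by simp
  have bdd: "bdd_below {R. achievable_common p R}"
    by (rule bdd_belowI[where m=0]) (simp add: achievable_common_def)
  show ?thesis unfolding R_SW_sc_def
  proof (rule dense_ge)
    fix R assume R: "?M < R"
    have "achievable_common p R"
      by (rule achievable[OF assms]) (use R M0 in auto)
    then show "Inf {R. achievable_common p R} \<le> R"
      by (intro cInf_lower bdd) simp
  qed
qed

end
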